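(* Let $G$ be a finite group with $g_k(G)\geq N$, where $k\geq2$, and let $1\to C\to G\to G'\to1$ be an exact sequence with $C$ cyclic. Then $g_{k-1}(G')\geq N$.
   Context: For a finite group $G$ and positive integer $N$, $r_N(G)$ is the minimum number of generators among subgroups of $G$ of index at most $N$, and $g_k(G)=\max\{N : |G|\geq N \text{ and } r_N(G)\geq k\}$. *)

theory Defs
  imports "HOL-Algebra.Algebra"
begin

definition grank :: "('a, 'b) monoid_scheme \<Rightarrow> nat" where
  "grank H = (LEAST n. \<exists>S. S \<subseteq> carrier H \<and> finite S \<and> card S = n \<and> generate H S = carrier H)"

definition rN :: "nat \<Rightarrow> ('a, 'b) monoid_scheme \<Rightarrow> nat" where
  "rN N G = Min {grank (subgroup_generated G K) | K. subgroup K G \<and> card (rcosets\<^bsub>G\<^esub> K) \<le> N}"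

definition gk :: "nat \<Rightarrow> ('a, 'b) monoid_scheme \<Rightarrow> nat" where
  "gk k G = Max ({0} \<union> {N. 1 \<le> N \<and> N \<le> order G \<and> k \<le> rN N G})"

end

theory Submission
  imports Defs
begin

lemma sg_eq:
  assumes "group G" "subgroup K G"
  shows "subgroup_generated G K = G\<lparr>carrier := K\<rparr>"
  using subgroup.carrier_subgroup_generated_subgroup[OF assms(2)]
  by (simp add: subgroup_generated_def carrier_subgroup_generated)

lemma gen_sg:
  assumes "group G" "subgroup K G" "T \<subseteq> K"
  shows "generate (subgroup_generated G K) T = generate G T"
  using sg_eq[OF assms(1,2)] group.generate_consistent[OF assms(1) assms(3,2)] by simp

lemma grank_le:
  assumes "group G" "subgroup K G" "T \<subseteq> K" "finite T" "generate G T = K"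
  shows "grank (subgroup_generated G K) \<le> card T"
proof -
  have "\<exists>S. S \<subseteq> carrier (subgroup_generated G K) \<and> finite S \<and> card S = card T
        \<and> generate (subgroup_generated G K) S = carrier (subgroup_generated G K)"
    using assms gen_sg[OF assms(1-3)] subgroup.carrier_subgroup_generated_subgroup[OF assms(2)]
    by auto
  then show ?thesis unfolding grank_def by (rule Least_le)
qed

lemma grank_ex:
  assumes "group G" "subgroup K G" "finite K"
  shows "\<exists>S. S \<subseteq> K \<and> finite S \<and> card S = grank (subgroup_generated G K) \<and> generate G S = K"
proof -
  let ?H = "subgroup_generated G K"
  have cH: "carrier ?H = K" using subgroup.carrier_subgroup_generated_subgroup[OF assms(2)] .
  have gH: "group ?H" using group.group_subgroup_generated[OF assms(1)] .
  have "\<exists>S. S \<subseteq> carrier ?H \<and> finite S \<and> card S = card K \<and> generate ?H S = carrier ?H"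
  proof (intro exI conjI)
    have "generate G K = K"
      using group.generate_subgroup_incl[OF assms(1) order_refl assms(2)] generate.incl[of _ K G] by blast
    then show "generate ?H K = carrier ?H" using gen_sg[OF assms(1,2) order_refl] cH by simp
  qed (use cH assms in auto)
  then have "\<exists>n. \<exists>S. S \<subseteq> carrier ?H \<and> finite S \<and> card S = n \<and> generate ?H S = carrier ?H"
    by blast
  then have "\<exists>S. S \<subseteq> carrier ?H \<and> finite S \<and> card S = grank ?H \<and> generate ?H S = carrier ?H"
    unfolding grank_def by (rule LeastI_ex)
  then obtain S where "S \<subseteq> K" "finite S" "card S = grank ?H" "generate ?H S = K" using cH by auto
  then show ?thesis using gen_sg[OF assms(1,2)] by auto
qed

lemma preimage_subgroup:
  assumes G: "group G" and G': "group G'" and h: "h \<in> hom G G'" and K': "subgroup K' G'"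
  shows "subgroup {z \<in> carrier G. h z \<in> K'} G"
proof -
  interpret group_hom G G' h using G G' h by (simp add: group_hom_def group_hom_axioms_def)
  show ?thesis
  proof (rule G.subgroupI)
    show "{z \<in> carrier G. h z \<in> K'} \<noteq> {}" using subgroup.one_closed[OF K'] by auto
    show "\<And>a. a \<in> {z \<in> carrier G. h z \<in> K'} \<Longrightarrow> inv\<^bsub>G\<^esub> a \<in> {z \<in> carrier G. h z \<in> K'}"
      using subgroup.m_inv_closed[OF K'] by auto
    show "\<And>a b. a \<in> {z \<in> carrier G. h z \<in> K'} \<Longrightarrow> b \<in> {z \<in> carrier G. h z \<in> K'} \<Longrightarrow> a \<otimes>\<^bsub>G\<^esub> b \<in> {z \<in> carrier G. h z \<in> K'}"
      using subgroup.m_closed[OF K'] by auto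
  qed auto
qed

lemma fibre_eq:
  assumes G: "group G" and G': "group G'" and h: "h \<in> hom G G'" and x: "x \<in> carrier G"
  shows "{z \<in> carrier G. h z = h x} = kernel G G' h #>\<^bsub>G\<^esub> x"
proof -
  interpret group_hom G G' h using G G' h by (simp add: group_hom_def group_hom_axioms_def)
  show ?thesis
  proof
    show "{z \<in> carrier G. h z = h x} \<subseteq> kernel G G' h #>\<^bsub>G\<^esub> x"
    proof
      fix z assume z: "z \<in> {z \<in> carrier G. h z = h x}"
      then have zc: "z \<in> carrier G" and e: "h z = h x" by auto
      have "z \<otimes>\<^bsub>G\<^esub> inv\<^bsub>G\<^esub> x \<in> kernel G G' h"
        using zc x e by (simp add: kernel_def)
      moreover have "z = (z \<otimes>\<^bsub>G\<^esub> inv\<^bsub>G\<^esub> x) \<otimes>\<^bsub>G\<^esub> x"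
        using zc x by (simp add: G.m_assoc)
      ultimately show "z \<in> kernel G G' h #>\<^bsub>G\<^esub> x" unfolding r_coset_def by blast
    qed
    show "kernel G G' h #>\<^bsub>G\<^esub> x \<subseteq> {z \<in> carrier G. h z = h x}"
      using x by (auto simp: r_coset_def kernel_def)
  qed
qed

lemma fibre_card:
  assumes G: "group G" and G': "group G'" and h: "h \<in> hom G G'" and x: "x \<in> carrier G"
  shows "card {z \<in> carrier G. h z = h x} = card (kernel G G' h)"
proof -
  interpret group_hom G G' h using G G' h by (simp add: group_hom_def group_hom_axioms_def)
  have "kernel G G' h #>\<^bsub>G\<^esub> x \<in> rcosets\<^bsub>G\<^esub> (kernel G G' h)"
    using x by (auto simp: RCOSETS_def)
  then show ?thesis using fibre_eq[OF assms] G.card_rcosets_equal subgroup.subset[OF subgroup_kernel]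
    by metis
qed

lemma preimage_card:
  assumes G: "group G" and G': "group G'" and h: "h \<in> hom G G'" and surj: "h ` carrier G = carrier G'"
    and fin: "finite (carrier G)" and K': "K' \<subseteq> carrier G'"
  shows "card {z \<in> carrier G. h z \<in> K'} = card K' * card (kernel G G' h)"
proof -
  have finK': "finite K'" using K' surj fin by (metis finite_imageI finite_subset)
  have eq: "{z \<in> carrier G. h z \<in> K'} = (\<Union>y\<in>K'. {z \<in> carrier G. h z = y})" by auto
  have "card (\<Union>y\<in>K'. {z \<in> carrier G. h z = y}) = (\<Sum>y\<in>K'. card {z \<in> carrier G. h z = y})"
    by (rule card_UN_disjoint) (use finK' fin in auto)
  also have "\<dots> = (\<Sum>y\<in>K'. card (kernel G G' h))"
  proof (rule sum.cong)
    fix y assume "y \<in> K'"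
    then obtain x where x: "x \<in> carrier G" "y = h x" using K' surj by blast
    then show "card {z \<in> carrier G. h z = y} = card (kernel G G' h)"
      using fibre_card[OF G G' h x(1)] by simp
  qed simp
  finally show ?thesis using eq by simp
qed

lemma index_eq:
  assumes G: "group G" and G': "group G'" and h: "h \<in> hom G G'" and surj: "h ` carrier G = carrier G'"
    and fin: "finite (carrier G)" and K': "subgroup K' G'"
  shows "card (rcosets\<^bsub>G\<^esub> {z \<in> carrier G. h z \<in> K'}) = card (rcosets\<^bsub>G'\<^esub> K')"
proof -
  interpret group_hom G G' h using G G' h by (simp add: group_hom_def group_hom_axioms_def)
  let ?K = "{z \<in> carrier G. h z \<in> K'}"
  let ?c = "card (kernel G G' h)"
  have fin': "finite (carrier G')" using surj fin by (metis finite_imageI)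
  have K: "subgroup ?K G" using preimage_subgroup[OF G G' h K'] .
  have l1: "card (rcosets\<^bsub>G\<^esub> ?K) * card ?K = order G" using G.lagrange_finite[OF fin K] .
  have l2: "card (rcosets\<^bsub>G'\<^esub> K') * card K' = order G'" using H.lagrange_finite[OF fin' K'] .
  have "{z \<in> carrier G. h z \<in> carrier G'} = carrier G" by auto
  then have oG: "order G = order G' * ?c"
    using preimage_card[OF G G' h surj fin order_refl] by (simp add: order_def)
  have cK: "card ?K = card K' * ?c"
    using preimage_card[OF G G' h surj fin subgroup.subset[OF K']] .
  have c0: "?c > 0"
  proof -
    have "\<one>\<^bsub>G\<^esub> \<in> kernel G G' h" by (simp add: kernel_def)
    moreover have "finite (kernel G G' h)" using fin by (rule finite_subset[rotated]) (auto simp: kernel_def)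
    ultimately show ?thesis by (metis card_gt_0_iff empty_iff)
  qed
  have k0: "card K' > 0"
  proof -
    have "finite K'" using fin' subgroup.subset[OF K'] finite_subset by blast
    then show ?thesis using subgroup.one_closed[OF K'] by (metis card_gt_0_iff empty_iff)
  qed
  have "card (rcosets\<^bsub>G\<^esub> ?K) * (card K' * ?c) = card (rcosets\<^bsub>G'\<^esub> K') * (card K' * ?c)"
    using l1 l2 oG cK by (metis mult.assoc)
  then show ?thesis using c0 k0 by simp
qed

lemma grank_bound:
  assumes G: "group G" and G': "group G'" and h: "h \<in> hom G G'" and surj: "h ` carrier G = carrier G'"
    and fin: "finite (carrier G)" and K': "subgroup K' G'"
    and cyc: "cyclic_group (subgroup_generated G (kernel G G' h))"
  shows "grank (subgroup_generated G {z \<in> carrier G. h z \<in> K'}) \<le> grank (subgroup_generated G' K') + 1"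
proof -
  interpret group_hom G G' h using G G' h by (simp add: group_hom_def group_hom_axioms_def)
  let ?K = "{z \<in> carrier G. h z \<in> K'}"
  let ?C = "kernel G G' h"
  have fin': "finite (carrier G')" using surj fin by (metis finite_imageI)
  have K: "subgroup ?K G" using preimage_subgroup[OF G G' h K'] .
  have C: "subgroup ?C G" by (rule subgroup_kernel)
  obtain c where c: "c \<in> carrier (subgroup_generated G ?C)"
    and cg: "subgroup_generated (subgroup_generated G ?C) {c} = subgroup_generated G ?C"
    using cyc unfolding cyclic_group_def by blast
  have e4: "carrier (subgroup_generated G ?C) = ?C"
    by (rule subgroup.carrier_subgroup_generated_subgroup[OF C])
  have cC: "c \<in> ?C" using c e4 by blast
  have e1: "carrier (subgroup_generated (subgroup_generated G ?C) {c})
      = generate (subgroup_generated G ?C) (carrier (subgroup_generated G ?C) \<inter> {c})"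
    by (rule carrier_subgroup_generated)
  have e2: "carrier (subgroup_generated G ?C) \<inter> {c} = {c}" using c by blast
  have e3: "generate (subgroup_generated G ?C) {c} = generate G {c}"
    using gen_sg[OF G C, of "{c}"] cC by blast
  have e5: "carrier (subgroup_generated (subgroup_generated G ?C) {c}) = carrier (subgroup_generated G ?C)"
    using arg_cong[OF cg, of carrier] .
  have Cgen: "?C = generate G {c}"
    using e1 e2 e3 e4 e5 by argo
  have finK': "finite K'" using fin' subgroup.subset[OF K'] finite_subset by blast
  obtain S' where S': "S' \<subseteq> K'" "finite S'" "card S' = grank (subgroup_generated G' K')" "generate G' S' = K'"
    using grank_ex[OF G' K' finK'] by blast
  define lift where "lift = (\<lambda>y. SOME x. x \<in> carrier G \<and> h x = y)"
  have lift: "lift y \<in> carrier G \<and> h (lift y) = y" if "y \<in> carrier G'" for y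
  proof -
    have "y \<in> h ` carrier G" using that surj by simp
    then obtain x where "x \<in> carrier G" "h x = y" by (rule imageE) simp
    then have "\<exists>x. x \<in> carrier G \<and> h x = y" by blast
    then show ?thesis unfolding lift_def by (rule someI_ex)
  qed
  define S where "S = lift ` S'"
  have S'c: "S' \<subseteq> carrier G'" using S'(1) subgroup.subset[OF K'] by blast
  have SK: "S \<subseteq> ?K"
  proof
    fix x assume "x \<in> S"
    then obtain y where y: "y \<in> S'" "x = lift y" unfolding S_def by blast
    then have "y \<in> carrier G'" "y \<in> K'" using S'c S'(1) by blast+
    then show "x \<in> ?K" using lift[of y] y(2) by simp
  qed
  have SG: "S \<subseteq> carrier G" using SK by auto
  have hS: "h ` S = S'"
  proof -
    have "h ` S = (\<lambda>y. h (lift y)) ` S'" unfolding S_def by (simp add: image_image)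
    also have "\<dots> = S'"
    proof (rule image_cong[OF refl, THEN trans])
      show "\<And>y. y \<in> S' \<Longrightarrow> h (lift y) = y" using lift S'c by blast
    qed simp
    finally show ?thesis .
  qed
  have cardS: "card S \<le> card S'" unfolding S_def by (rule card_image_le[OF S'(2)])
  define T where "T = insert c S"
  have TK: "T \<subseteq> ?K" using SK cC subgroup.one_closed[OF K'] unfolding T_def by (auto simp: kernel_def)
  have TG: "T \<subseteq> carrier G" using TK by auto
  have finT: "finite T" unfolding T_def S_def using S'(2) by simp
  have cardT: "card T \<le> card S' + 1" unfolding T_def using cardS finT
    by (simp add: card_insert_if finite_imageI S'(2) S_def)
  have genT: "generate G T = ?K"
  proof
    show "generate G T \<subseteq> ?K" using G.generate_subgroup_incl[OF TK K] .
    show "?K \<subseteq> generate G T"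
    proof
      fix x assume x: "x \<in> ?K"
      then have "h x \<in> generate G' (h ` S)" using S'(4) hS by simp
      also have "\<dots> = h ` generate G S" using generate_img[OF SG] .
      finally have "h x \<in> h ` generate G S" .
      then obtain y where y: "y \<in> generate G S" "h y = h x" by (metis imageE)
      have yc: "y \<in> carrier G" using G.generate_in_carrier[OF SG y(1)] .
      have xc: "x \<in> carrier G" using x by simp
      have "h (inv\<^bsub>G\<^esub> y \<otimes>\<^bsub>G\<^esub> x) = inv\<^bsub>G'\<^esub> h y \<otimes>\<^bsub>G'\<^esub> h x"
        using yc xc by (simp add: hom_mult hom_inv)
      also have "\<dots> = \<one>\<^bsub>G'\<^esub>" using y(2) xc by (simp add: H.l_inv)
      finally have "inv\<^bsub>G\<^esub> y \<otimes>\<^bsub>G\<^esub> x \<in> ?C" using yc xc by (simp add: kernel_def)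
      then have i1: "inv\<^bsub>G\<^esub> y \<otimes>\<^bsub>G\<^esub> x \<in> generate G {c}" using Cgen by argo
      have sub1: "{c} \<subseteq> T" unfolding T_def by simp
      have sub2: "S \<subseteq> T" unfolding T_def by auto
      have "inv\<^bsub>G\<^esub> y \<otimes>\<^bsub>G\<^esub> x \<in> generate G T"
        using i1 G.mono_generate[OF sub1] by (rule subsetD[rotated])
      moreover have "y \<in> generate G T"
        using y(1) G.mono_generate[OF sub2] by (rule subsetD[rotated])
      ultimately have "y \<otimes>\<^bsub>G\<^esub> (inv\<^bsub>G\<^esub> y \<otimes>\<^bsub>G\<^esub> x) \<in> generate G T"
        by (rule subgroup.m_closed[OF G.generate_is_subgroup[OF TG], rotated])
      moreover have "y \<otimes>\<^bsub>G\<^esub> (inv\<^bsub>G\<^esub> y \<otimes>\<^bsub>G\<^esub> x) = x"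
        using yc xc by (metis G.m_assoc G.inv_closed G.r_inv G.l_one)
      ultimately show "x \<in> generate G T" by argo
    qed
  qed
  have "grank (subgroup_generated G ?K) \<le> card T" using grank_le[OF G K TK finT genT] .
  then show ?thesis using cardT S'(3) by simp
qed


lemma fin_granks:
  assumes "finite (carrier G)"
  shows "finite {grank (subgroup_generated G K) | K. subgroup K G \<and> P K}"
proof -
  have "{grank (subgroup_generated G K) | K. subgroup K G \<and> P K}
        \<subseteq> (\<lambda>K. grank (subgroup_generated G K)) ` Pow (carrier G)"
    using subgroup.subset by blast
  then show ?thesis using assms by (meson finite_Pow_iff finite_imageI finite_subset)
qed

theorem mainTheorem14:
  fixes G :: "('a, 'b) monoid_scheme" and G' :: "('c, 'd) monoid_scheme"
    and h :: "'a \<Rightarrow> 'c" and k N :: nat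
  assumes "group G" and "finite (carrier G)" and "group G'"
    and "h \<in> hom G G'" and "h ` carrier G = carrier G'"
    and "cyclic_group (subgroup_generated G (kernel G G' h))"
    and "k \<ge> 2" and "gk k G \<ge> N"
  shows "gk (k - 1) G' \<ge> N"
proof (cases "N = 0")
  case True then show ?thesis by simp
next
  case False
  note G = assms(1) and fin = assms(2) and G' = assms(3) and h = assms(4) and surj = assms(5)
    and cyc = assms(6)
  interpret group_hom G G' h using G G' h by (simp add: group_hom_def group_hom_axioms_def)
  have fin': "finite (carrier G')" using surj fin by (metis finite_imageI)
  define A where "A = {N. 1 \<le> N \<and> N \<le> order G \<and> k \<le> rN N G}"
  have finA: "finite ({0} \<union> A)" unfolding A_def
    by (rule finite_subset[of _ "{..order G}"]) auto
  have "Max ({0} \<union> A) \<ge> N" using assms(8) unfolding gk_def A_def by simp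
  then have "Max ({0} \<union> A) \<noteq> 0" using False by linarith
  moreover have "Max ({0} \<union> A) \<in> {0} \<union> A" using finA by (rule Max_in) simp
  ultimately have MA: "Max ({0} \<union> A) \<in> A" by auto
  define M where "M = Max ({0} \<union> A)"
  have NM: "N \<le> M" unfolding M_def by fact
  have kM: "k \<le> rN M G" using MA unfolding A_def M_def by simp
  have claim: "k - 1 \<le> grank (subgroup_generated G' K')"
    if K': "subgroup K' G'" and idx: "card (rcosets\<^bsub>G'\<^esub> K') \<le> N" for K'
  proof -
    let ?K = "{z \<in> carrier G. h z \<in> K'}"
    have K: "subgroup ?K G" using preimage_subgroup[OF G G' h K'] .
    have "card (rcosets\<^bsub>G\<^esub> ?K) \<le> M" using index_eq[OF G G' h surj fin K'] idx NM by simp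
    then have mem: "grank (subgroup_generated G ?K) \<in>
        {grank (subgroup_generated G K) | K. subgroup K G \<and> card (rcosets\<^bsub>G\<^esub> K) \<le> M}"
      using K by blast
    have "rN M G \<le> grank (subgroup_generated G ?K)"
      unfolding rN_def by (rule Min_le[OF fin_granks[OF fin] mem])
    then show ?thesis using kM grank_bound[OF G G' h surj fin K' cyc] by linarith
  qed
  have o0: "order G' > 0" using fin' H.one_closed unfolding order_def by (metis card_gt_0_iff empty_iff)
  have NG': "N \<le> order G'"
  proof (rule ccontr)
    assume "\<not> N \<le> order G'"
    have t: "subgroup {\<one>\<^bsub>G'\<^esub>} G'" by (rule H.triv_subgroup)
    have "card (rcosets\<^bsub>G'\<^esub> {\<one>\<^bsub>G'\<^esub>}) * 1 = order G'"
      using H.lagrange[OF t] by simp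
    then have "card (rcosets\<^bsub>G'\<^esub> {\<one>\<^bsub>G'\<^esub>}) \<le> N" using \<open>\<not> N \<le> order G'\<close> by simp
    then have "k - 1 \<le> grank (subgroup_generated G' {\<one>\<^bsub>G'\<^esub>})" using claim[OF t] by simp
    moreover have "grank (subgroup_generated G' {\<one>\<^bsub>G'\<^esub>}) \<le> card ({} :: 'c set)"
      by (rule grank_le[OF G' t]) (simp_all add: H.generate_empty)
    ultimately show False using assms(7) by simp
  qed
  have self: "subgroup (carrier G') G'" by (rule H.subgroup_self)
  have "card (rcosets\<^bsub>G'\<^esub> (carrier G')) * order G' = order G'"
    using H.lagrange[OF self] by (simp add: order_def)
  then have "card (rcosets\<^bsub>G'\<^esub> (carrier G')) = 1" using o0 by simp
  then have mem': "grank (subgroup_generated G' (carrier G')) \<in>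
      {grank (subgroup_generated G' K) | K. subgroup K G' \<and> card (rcosets\<^bsub>G'\<^esub> K) \<le> N}"
    using self False by force
  have "k - 1 \<le> rN N G'"
    unfolding rN_def
  proof (subst Min_ge_iff[OF fin_granks[OF fin']])
    show "{grank (subgroup_generated G' K) | K. subgroup K G' \<and> card (rcosets\<^bsub>G'\<^esub> K) \<le> N} \<noteq> {}"
      using mem' by blast
    show "\<forall>a\<in>{grank (subgroup_generated G' K) | K. subgroup K G' \<and> card (rcosets\<^bsub>G'\<^esub> K) \<le> N}. k - 1 \<le> a"
      using claim by blast
  qed
  then have NA': "N \<in> {N. 1 \<le> N \<and> N \<le> order G' \<and> k - 1 \<le> rN N G'}"
    using False NG' by simp
  have "finite ({0} \<union> {N. 1 \<le> N \<and> N \<le> order G' \<and> k - 1 \<le> rN N G'})"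
    by (rule finite_subset[of _ "{..order G'}"]) auto
  then show ?thesis unfolding gk_def using NA' by (simp add: Max_ge)
qed

end
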